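(* Let $d>2$ be even and let $H$ be a $d\times d$ complex Hadamard matrix. Let $H'$ be the dephased form of $H$. Suppose $H'$ has $m$ pairwise disjoint ER pairs of columns, where $1\le m<d/2$. Then $H$ belongs to an $m$-dimensional affine family: there exist $m$ linearly independent real $d\times d$ matrices $R_1,\dots,R_m$, each with zero first row and zero first column, such that $H'\circ\exp\!\big(i\sum_{k=1}^m \xi_k R_k\big)$ is a complex Hadamard matrix for every $(\xi_1,\dots,\xi_m)\in\mathbb{R}^m$.
   Context: A $d\times d$ complex Hadamard matrix is a matrix $H$ all of whose entries have modulus $1$ and whose columns are pairwise orthogonal (equivalently $HH^*=dI$). It is dephased if every entry of its first row and first column equals $1$; every complex Hadamard matrix $H$ can be written uniquely as $D_1H'D_2$ with $D_1,D_2$ diagonal unitary and $H'$ dephased, and $H'$ is called the dephased form of $H$. Two distinct columns $C_A,C_B$ of a complex Hadamard matrix form an ER (equivalent to real) pair if $\overline{(C_A)_j}(C_B)_j\in\{1,-1\}$ for every row index $j=0,\dots,d-1$. For matrices $A,B$ of equal size, $A\circ B$ is the entrywise (Hadamard) product and $\exp(iR)$ denotes the entrywise exponential $(\exp(iR))_{jk}=e^{iR_{jk}}$. *)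

theory Defs
  imports Complex_Main
begin

text \<open>Square matrices of size d are represented as functions nat => nat => complex;
  only the entries with indices below d are meaningful. Rows/columns are indexed 0..d-1.\<close>

definition is_CHM :: "nat \<Rightarrow> (nat \<Rightarrow> nat \<Rightarrow> complex) \<Rightarrow> bool" where
  "is_CHM d H \<longleftrightarrow>
     (\<forall>j<d. \<forall>k<d. norm (H j k) = 1) \<and>
     (\<forall>k<d. \<forall>l<d. k \<noteq> l \<longrightarrow> (\<Sum>j<d. cnj (H j k) * H j l) = 0)"

definition dephased :: "nat \<Rightarrow> (nat \<Rightarrow> nat \<Rightarrow> complex) \<Rightarrow> bool" where
  "dephased d H \<longleftrightarrow> (\<forall>k<d. H 0 k = 1) \<and> (\<forall>j<d. H j 0 = 1)"

definition dephased_form_of ::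
  "nat \<Rightarrow> (nat \<Rightarrow> nat \<Rightarrow> complex) \<Rightarrow> (nat \<Rightarrow> nat \<Rightarrow> complex) \<Rightarrow> bool" where
  "dephased_form_of d H H' \<longleftrightarrow>
     is_CHM d H' \<and> dephased d H' \<and>
     (\<exists>D1 D2 :: nat \<Rightarrow> complex.
        (\<forall>j<d. norm (D1 j) = 1) \<and> (\<forall>k<d. norm (D2 k) = 1) \<and>
        (\<forall>j<d. \<forall>k<d. H j k = D1 j * H' j k * D2 k))"

definition ER_pair :: "nat \<Rightarrow> (nat \<Rightarrow> nat \<Rightarrow> complex) \<Rightarrow> nat \<Rightarrow> nat \<Rightarrow> bool" where
  "ER_pair d H a b \<longleftrightarrow> a < d \<and> b < d \<and> a \<noteq> b \<and>
     (\<forall>j<d. cnj (H j a) * H j b \<in> {1, -1})"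

end

theory Submission
  imports Defs
begin

lemma unit_cnj: "norm (z::complex) = 1 \<Longrightarrow> cnj z * z = 1"
  by (metis complex_norm_square mult.commute of_real_1 power_one)

lemma sum4:
  fixes x f g :: "nat \<Rightarrow> complex"
  assumes "(\<Sum>j<d. x j) = 0" "(\<Sum>j<d. x j * f j) = 0" "(\<Sum>j<d. x j * g j) = 0" "(\<Sum>j<d. x j * f j * g j) = 0"
  shows "(\<Sum>j<d. x j * (A + B * f j) * (C + D * g j)) = 0"
proof -
  have "(\<Sum>j<d. x j * (A + B * f j) * (C + D * g j)) = A*C*(\<Sum>j<d. x j) + B*C*(\<Sum>j<d. x j * f j) + A*D*(\<Sum>j<d. x j * g j) + B*D*(\<Sum>j<d. x j * f j * g j)"
    by (simp add: sum_distrib_left sum.distrib algebra_simps)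
  with assms show ?thesis by simp
qed

theorem theorem1:
  fixes d m :: nat and H H' :: "nat \<Rightarrow> nat \<Rightarrow> complex" and a b :: "nat \<Rightarrow> nat"
  assumes "even d" and "d > 2"
    and "is_CHM d H"
    and "dephased_form_of d H H'"
    and "1 \<le> m" and "2 * m < d"
    and "\<forall>i<m. ER_pair d H' (a i) (b i)"
    and "inj_on a {..<m}" and "inj_on b {..<m}"
    and "a ` {..<m} \<inter> b ` {..<m} = {}"
  shows "\<exists>R :: nat \<Rightarrow> nat \<Rightarrow> nat \<Rightarrow> real.
           (\<forall>k<m. \<forall>j<d. R k 0 j = 0 \<and> R k j 0 = 0) \<and>
           (\<forall>c :: nat \<Rightarrow> real.
              (\<forall>j<d. \<forall>l<d. (\<Sum>k<m. c k * R k j l) = 0) \<longrightarrow> (\<forall>k<m. c k = 0)) \<and>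
           (\<forall>\<xi> :: nat \<Rightarrow> real.
              is_CHM d (\<lambda>j l. H' j l * exp (\<i> * complex_of_real (\<Sum>k<m. \<xi> k * R k j l))))"
proof -
  from assms(4) have chm: "is_CHM d H'" and dep: "dephased d H'"
    unfolding dephased_form_of_def by auto
  have nrm: "\<And>j l. j<d \<Longrightarrow> l<d \<Longrightarrow> norm (H' j l) = 1" using chm unfolding is_CHM_def by auto
  have orth: "\<And>l l'. l<d \<Longrightarrow> l'<d \<Longrightarrow> l\<noteq>l' \<Longrightarrow> (\<Sum>j<d. cnj (H' j l) * H' j l') = 0"
    using chm unfolding is_CHM_def by auto
  have er: "\<And>k. k<m \<Longrightarrow> ER_pair d H' (a k) (b k)" using assms(7) by auto
  have ad: "\<And>k. k<m \<Longrightarrow> a k < d \<and> b k < d \<and> a k \<noteq> b k" using er unfolding ER_pair_def by auto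
  define \<epsilon> where "\<epsilon> k j = cnj (H' j (a k)) * H' j (b k)" for k j
  have epm: "\<And>k j. k<m \<Longrightarrow> j<d \<Longrightarrow> \<epsilon> k j = 1 \<or> \<epsilon> k j = -1"
    using er unfolding ER_pair_def \<epsilon>_def by auto
  define PA where "PA = a ` {..<m} \<union> b ` {..<m}"
  have uniq: "\<And>k k' l. k<m \<Longrightarrow> k'<m \<Longrightarrow> (l = a k \<or> l = b k) \<Longrightarrow> (l = a k' \<or> l = b k') \<Longrightarrow> k = k'"
    using assms(8,9,10) unfolding inj_on_def by blast
  define kof where "kof l = (THE k. k<m \<and> (l = a k \<or> l = b k))" for l
  have kof: "\<And>k l. k<m \<Longrightarrow> (l = a k \<or> l = b k) \<Longrightarrow> kof l = k"
  proof -
    fix k l assume h: "k<m" "l = a k \<or> l = b k"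
    show "kof l = k" unfolding kof_def
    proof (rule the_equality)
      show "k < m \<and> (l = a k \<or> l = b k)" using h by simp
      fix y assume "y < m \<and> (l = a y \<or> l = b y)"
      then show "y = k" using uniq[of y k l] h by blast
    qed
  qed
  have PAE: "\<And>l. l \<in> PA \<Longrightarrow> kof l < m \<and> (l = a (kof l) \<or> l = b (kof l))"
  proof -
    fix l assume "l \<in> PA"
    then obtain k where "k<m" "l = a k \<or> l = b k" unfolding PA_def by blast
    then show "kof l < m \<and> (l = a (kof l) \<or> l = b (kof l))" using kof[of k l] by simp
  qed
  define \<chi> where "\<chi> k j = (if \<epsilon> k j = -1 then 1 else 0 :: real)" for k j
  define ind where "ind k l = (if l = a k \<or> l = b k then 1 else 0 :: real)" for k l
  define R where "R k j l = \<chi> k j * (ind k l - ind k 0)" for k j l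
  have closed: "\<And>w j l. (\<Sum>k<m. w k * \<chi> k j * ind k l) = (if l \<in> PA then w (kof l) * \<chi> (kof l) j else 0)"
  proof -
    fix w j l
    show "(\<Sum>k<m. w k * \<chi> k j * ind k l) = (if l \<in> PA then w (kof l) * \<chi> (kof l) j else 0)"
    proof (cases "l \<in> PA")
      case True
      then have k: "kof l < m" "l = a (kof l) \<or> l = b (kof l)" using PAE by auto
      have "(\<Sum>k<m. w k * \<chi> k j * ind k l) = (\<Sum>k<m. if k = kof l then w (kof l) * \<chi> (kof l) j else 0)"
        apply (rule sum.cong, simp)
        using k uniq unfolding ind_def by auto
      also have "\<dots> = w (kof l) * \<chi> (kof l) j" using k(1) by simp
      finally show ?thesis using True by simp
    next
      case False
      then have "\<And>k. k<m \<Longrightarrow> ind k l = 0" unfolding ind_def PA_def by auto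
      then show ?thesis using False by simp
    qed
  qed

  have split: "\<And>w j l. (\<Sum>k<m. w k * R k j l) = (\<Sum>k<m. w k * \<chi> k j * ind k l) - (\<Sum>k<m. w k * \<chi> k j * ind k 0)"
    by (simp add: R_def sum_subtractf[symmetric] algebra_simps)
  have d0: "0 < d" using assms(2) by simp
  have eps0: "\<And>k. k<m \<Longrightarrow> \<epsilon> k 0 = 1" using dep ad unfolding dephased_def \<epsilon>_def by simp
  have zero: "\<forall>k<m. \<forall>j<d. R k 0 j = 0 \<and> R k j 0 = 0"
    using eps0 unfolding R_def \<chi>_def by simp
  have finPA: "finite PA" unfolding PA_def by simp
  have cardPA: "card PA \<le> 2*m" unfolding PA_def
    by (metis card_Un_le card_image_le card_lessThan finite_lessThan add_le_mono mult_2 order_trans)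
  obtain l0 where l0: "l0 < d" "l0 \<notin> PA"
  proof -
    have "\<not> {..<d} \<subseteq> PA"
    proof
      assume "{..<d} \<subseteq> PA"
      then have "card {..<d} \<le> card PA" using finPA card_mono by blast
      then show False using cardPA assms(6) by simp
    qed
    then show ?thesis using that by auto
  qed
  have negex: "\<And>k. k<m \<Longrightarrow> \<exists>j<d. \<epsilon> k j = -1"
  proof (rule ccontr)
    fix k assume k: "k<m" and "\<not> (\<exists>j<d. \<epsilon> k j = -1)"
    then have "\<And>j. j<d \<Longrightarrow> \<epsilon> k j = 1" using epm by blast
    then have "(\<Sum>j<d. \<epsilon> k j) = (\<Sum>j<d. 1)" by simp
    moreover have "(\<Sum>j<d. \<epsilon> k j) = 0" unfolding \<epsilon>_def using orth ad k by simp
    ultimately show False using d0 by simp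
  qed
  have lin: "\<forall>c :: nat \<Rightarrow> real. (\<forall>j<d. \<forall>l<d. (\<Sum>k<m. c k * R k j l) = 0) \<longrightarrow> (\<forall>k<m. c k = 0)"
  proof (intro allI impI)
    fix c k assume hc: "\<forall>j<d. \<forall>l<d. (\<Sum>k<m. c k * R k j l) = 0" and k: "k<m"
    obtain j where j: "j<d" "\<epsilon> k j = -1" using negex k by blast
    have "a k \<in> PA" unfolding PA_def using k by simp
    moreover have "kof (a k) = k" using kof k by simp
    ultimately have "(\<Sum>i<m. c i * \<chi> i j * ind i (a k)) = c k" using closed[of c j "a k"] j unfolding \<chi>_def by simp
    moreover have "(\<Sum>k<m. c k * \<chi> k j * ind k l0) = 0" using closed[of c j l0] l0 by simp
    moreover have "(\<Sum>i<m. c i * R i j (a k)) = 0" "(\<Sum>k<m. c k * R k j l0) = 0"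
      using hc j l0 ad k by auto
    ultimately show "c k = 0" using split[of c j "a k"] split[of c j l0] by simp
  qed

  define q where "q l = (if l \<in> PA then (if l = a (kof l) then b (kof l) else a (kof l)) else l)" for l
  define s where "s j l = (if l \<in> PA then \<epsilon> (kof l) j else 1)" for j l
  have spm: "\<And>j l. j<d \<Longrightarrow> s j l = 1 \<or> s j l = -1"
    unfolding s_def using PAE epm by auto
  have scnj: "\<And>j l. j<d \<Longrightarrow> cnj (s j l) = s j l"
    using spm by (metis complex_cnj_minus complex_cnj_one)
  have qd: "\<And>l. l<d \<Longrightarrow> q l < d" unfolding q_def using PAE ad by auto
  have twist: "\<And>j l. j<d \<Longrightarrow> l<d \<Longrightarrow> H' j l * s j l = H' j (q l)"
  proof -
    fix j l assume j: "j<d" and l: "l<d"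
    show "H' j l * s j l = H' j (q l)"
    proof (cases "l \<in> PA")
      case True
      define k where "k = kof l"
      have k: "k<m" "l = a k \<or> l = b k" using PAE[OF True] k_def by auto
      have ca: "cnj (H' j (a k)) * H' j (a k) = 1" using unit_cnj nrm j ad k(1) by blast
      have e1: "H' j (a k) * \<epsilon> k j = H' j (b k)"
        unfolding \<epsilon>_def using ca by (metis mult.assoc mult.commute mult_1)
      have e2: "H' j (b k) * \<epsilon> k j = H' j (a k)"
      proof -
        have "\<epsilon> k j * \<epsilon> k j = 1" using epm[OF k(1) j] by auto
        then show ?thesis using e1[symmetric] by (metis mult.assoc mult_1_right)
      qed
      show ?thesis using k e1 e2 True ad unfolding q_def s_def k_def[symmetric] by auto
    next
      case False
      then show ?thesis unfolding q_def s_def by simp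
    qed
  qed
  have qq: "\<And>l. q (q l) = l"
  proof -
    fix l show "q (q l) = l"
    proof (cases "l \<in> PA")
      case True
      define k where "k = kof l"
      have k: "k<m" "l = a k \<or> l = b k" using PAE[OF True] k_def by auto
      have ql: "q l = (if l = a k then b k else a k)" unfolding q_def k_def using True by simp
      have inPA: "a k \<in> PA" "b k \<in> PA" unfolding PA_def using k by auto
      have "kof (a k) = k" "kof (b k) = k" using kof k by auto
      then show ?thesis using ql inPA k ad[OF k(1)] unfolding q_def by auto
    next
      case False
      then show ?thesis unfolding q_def by simp
    qed
  qed
  define SP where "SP l l' = (\<exists>k<m. (l = a k \<and> l' = b k) \<or> (l = b k \<and> l' = a k))" for l l'
  have qne: "\<And>l l'. l \<noteq> l' \<Longrightarrow> \<not> SP l l' \<Longrightarrow> q l \<noteq> l'"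
  proof -
    fix l l' assume ne: "l \<noteq> l'" and ns: "\<not> SP l l'"
    show "q l \<noteq> l'"
    proof (cases "l \<in> PA")
      case True
      define k where "k = kof l"
      have k: "k<m" "l = a k \<or> l = b k" using PAE[OF True] k_def by auto
      have ql: "q l = (if l = a k then b k else a k)" unfolding q_def k_def using True by simp
      then show ?thesis using k ns ne unfolding SP_def by auto
    next
      case False
      then show ?thesis using ne unfolding q_def by simp
    qed
  qed
  have SPsym: "\<And>l l'. SP l l' = SP l' l" unfolding SP_def by blast
  have chmx: "\<forall>\<xi> :: nat \<Rightarrow> real.
              is_CHM d (\<lambda>j l. H' j l * exp (\<i> * complex_of_real (\<Sum>k<m. \<xi> k * R k j l)))"
  proof
    fix \<xi> :: "nat \<Rightarrow> real"
    define \<psi> where "\<psi> j l = (\<Sum>k<m. \<xi> k * \<chi> k j * ind k l)" for j l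
    define \<rho> where "\<rho> j = (\<Sum>k<m. \<xi> k * \<chi> k j * ind k 0)" for j
    define E where "E t = exp (\<i> * complex_of_real t)" for t
    have Eadd: "E (x - y) = E x * E (-y)" for x y
      by (simp add: E_def exp_add[symmetric] algebra_simps)
    have En: "norm (E t) = 1" for t by (simp add: E_def)
    have Mf: "\<And>j l. H' j l * exp (\<i> * complex_of_real (\<Sum>k<m. \<xi> k * R k j l)) = H' j l * E (\<psi> j l) * E (- \<rho> j)"
      using split[of \<xi>] Eadd unfolding \<psi>_def \<rho>_def E_def[symmetric] by (simp add: mult.assoc)
    define A where "A l = (if l \<in> PA then (1 + E (\<xi> (kof l)))/2 else 1)" for l
    define B where "B l = (if l \<in> PA then (1 - E (\<xi> (kof l)))/2 else 0)" for l
    have Ef: "\<And>j l. j<d \<Longrightarrow> E (\<psi> j l) = A l + B l * s j l"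
    proof -
      fix j l assume j: "j<d"
      have ps: "\<psi> j l = (if l \<in> PA then \<xi> (kof l) * \<chi> (kof l) j else 0)"
        unfolding \<psi>_def by (rule closed)
      show "E (\<psi> j l) = A l + B l * s j l"
      proof (cases "l \<in> PA")
        case True
        then have k: "kof l < m" using PAE by blast
        show ?thesis
        proof (cases "\<epsilon> (kof l) j = 1")
          case True
          then show ?thesis using ps \<open>l \<in> PA\<close> unfolding A_def B_def s_def \<chi>_def
            by (simp add: E_def add_divide_distrib[symmetric])
        next
          case False
          then have "\<epsilon> (kof l) j = -1" using epm[OF k j] by blast
          then show ?thesis using ps \<open>l \<in> PA\<close> unfolding A_def B_def s_def \<chi>_def
            by (simp add: E_def diff_divide_distrib[symmetric] add_divide_distrib[symmetric])
        qed
      next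
        case False
        then show ?thesis using ps unfolding A_def B_def s_def by (simp add: E_def)
      qed
    qed
    show "is_CHM d (\<lambda>j l. H' j l * exp (\<i> * complex_of_real (\<Sum>k<m. \<xi> k * R k j l)))"
      unfolding is_CHM_def Mf
    proof (intro conjI allI impI)
      fix j l assume "j<d" "l<d"
      then show "norm (H' j l * E (\<psi> j l) * E (- \<rho> j)) = 1" using nrm En by (simp add: norm_mult)
    next
      fix l l' assume l: "l<d" and l': "l'<d" and ne: "l \<noteq> l'"
      have pt: "\<And>j. cnj (H' j l * E (\<psi> j l) * E (- \<rho> j)) * (H' j l' * E (\<psi> j l') * E (- \<rho> j))
         = cnj (H' j l) * H' j l' * (cnj (E (\<psi> j l)) * E (\<psi> j l'))"
      proof -
        fix j
        have r: "cnj (E (- \<rho> j)) * E (- \<rho> j) = 1" using unit_cnj En by blast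
        have "cnj (H' j l * E (\<psi> j l) * E (- \<rho> j)) * (H' j l' * E (\<psi> j l') * E (- \<rho> j))
          = cnj (H' j l) * H' j l' * (cnj (E (\<psi> j l)) * E (\<psi> j l')) * (cnj (E (- \<rho> j)) * E (- \<rho> j))"
          by (simp add: ac_simps)
        then show "cnj (H' j l * E (\<psi> j l) * E (- \<rho> j)) * (H' j l' * E (\<psi> j l') * E (- \<rho> j))
         = cnj (H' j l) * H' j l' * (cnj (E (\<psi> j l)) * E (\<psi> j l'))" using r by simp
      qed
      show "(\<Sum>j<d. cnj (H' j l * E (\<psi> j l) * E (- \<rho> j)) * (H' j l' * E (\<psi> j l') * E (- \<rho> j))) = 0"
        unfolding pt
      proof (cases "SP l l'")
        case True
        then obtain k where k: "k<m" "(l = a k \<and> l' = b k) \<or> (l = b k \<and> l' = a k)" unfolding SP_def by blast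
        have inPA: "l \<in> PA" "l' \<in> PA" unfolding PA_def using k by auto
        have "kof l = k" "kof l' = k" using kof k(1) k(2) by auto
        then have "\<And>j. \<psi> j l = \<psi> j l'" unfolding \<psi>_def using closed inPA by simp
        then have "\<And>j. cnj (E (\<psi> j l)) * E (\<psi> j l') = 1" using unit_cnj En by metis
        then show "(\<Sum>j<d. cnj (H' j l) * H' j l' * (cnj (E (\<psi> j l)) * E (\<psi> j l'))) = 0"
          using orth[OF l l' ne] by simp
      next
        case False
        define x where "x j = cnj (H' j l) * H' j l'" for j
        have eq: "(\<Sum>j<d. cnj (H' j l) * H' j l' * (cnj (E (\<psi> j l)) * E (\<psi> j l')))
           = (\<Sum>j<d. x j * (cnj (A l) + cnj (B l) * s j l) * (A l' + B l' * s j l'))"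
          by (rule sum.cong) (simp_all add: Ef scnj x_def mult.assoc)
        have q1: "q l \<noteq> l'" using qne ne False by blast
        have q2: "q l' \<noteq> l" using qne ne False SPsym by metis
        have q3: "q l \<noteq> q l'" using qq ne by metis
        have s0: "(\<Sum>j<d. x j) = 0" unfolding x_def using orth[OF l l' ne] .
        have s1: "(\<Sum>j<d. x j * s j l) = 0"
        proof -
          have "(\<Sum>j<d. x j * s j l) = (\<Sum>j<d. cnj (H' j (q l)) * H' j l')"
          proof (rule sum.cong)
            fix j assume "j \<in> {..<d}"
            then have j: "j<d" by simp
            have "x j * s j l = cnj (H' j l * s j l) * H' j l'" using scnj[OF j] unfolding x_def by simp
            then show "x j * s j l = cnj (H' j (q l)) * H' j l'" using twist[OF j l] by simp
          qed simp
          then show ?thesis using orth[OF qd[OF l] l' q1] by simp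
        qed
        have s2: "(\<Sum>j<d. x j * s j l') = 0"
        proof -
          have "(\<Sum>j<d. x j * s j l') = (\<Sum>j<d. cnj (H' j l) * H' j (q l'))"
          proof (rule sum.cong)
            fix j assume "j \<in> {..<d}"
            then have j: "j<d" by simp
            have "x j * s j l' = cnj (H' j l) * (H' j l' * s j l')" unfolding x_def by simp
            then show "x j * s j l' = cnj (H' j l) * H' j (q l')" using twist[OF j l'] by simp
          qed simp
          then show ?thesis using orth[OF l qd[OF l'] q2[symmetric]] by simp
        qed
        have s3: "(\<Sum>j<d. x j * s j l * s j l') = 0"
        proof -
          have "(\<Sum>j<d. x j * s j l * s j l') = (\<Sum>j<d. cnj (H' j (q l)) * H' j (q l'))"
          proof (rule sum.cong)
            fix j assume "j \<in> {..<d}"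
            then have j: "j<d" by simp
            have "x j * s j l * s j l' = cnj (H' j l * s j l) * (H' j l' * s j l')"
              using scnj[OF j] unfolding x_def by simp
            then show "x j * s j l * s j l' = cnj (H' j (q l)) * H' j (q l')" using twist[OF j l] twist[OF j l'] by simp
          qed simp
          then show ?thesis using orth[OF qd[OF l] qd[OF l'] q3] by simp
        qed
        show "(\<Sum>j<d. cnj (H' j l) * H' j l' * (cnj (E (\<psi> j l)) * E (\<psi> j l'))) = 0"
          unfolding eq by (rule sum4[OF s0 s1 s2 s3])
      qed
    qed
  qed
  show ?thesis using zero lin chmx by blast
qed

end
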